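(* Let $T$ be an embedded plane tropical curve with dual subdivision $S_T$ of its Newton polygon $\Delta$. Let $\delta_1,\dots,\delta_k$ be all the triangles and parallelograms of $S_T$ and let $\delta_{k+1},\dots,\delta_l$ be all the other polygons of $S_T$, listed in any order. Then $$rk(T)\le\#Vert(S_T)-1-\sum_{\delta\in\{\delta_1,\dots,\delta_k\}}(\#Vert(\delta)-3)-\sum_{i=k+1}^{l}\Big(\#Vert(\delta_i)-\max\Big\{3,\ \#\Big(Vert(\delta_i)\cap\bigcup_{j<i}Vert(\delta_j)\Big)\Big\}\Big).$$
   Context: An embedded plane tropical curve $T$ is the corner locus of $\max_{\omega\in\Delta\cap\mathbb{Z}^2}(\langle\omega,x\rangle+c_\omega)$, $x\in\mathbb{R}^2$, with Newton polygon $\Delta$; $S_T$ is the dual subdivision (the regular subdivision of $\Delta$ induced by $\omega\mapsto c_\omega$), $Vert(S_T)$ its vertex set and $Vert(\delta)$ the vertex set of a polygon $\delta$. The rank $rk(T)$ is the dimension of the set of vectors $(c_\omega)_{\omega\in Vert(S_T)}$, modulo adding a common constant, that induce exactly the subdivision $S_T$ (the space of curves with the same dual subdivision). *)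

theory Defs
  imports "HOL-Analysis.Analysis" "HOL-Library.Function_Algebras"
begin

definition rp :: "int \<times> int \<Rightarrow> real \<times> real" where
  "rp w = (real_of_int (fst w), real_of_int (snd w))"

text \<open>The tropical polynomial with (finite) support A and coefficients c, i.e.
  max over w in A of (<w,x> + c w).  Monomials outside A have coefficient minus infinity.\<close>

definition trop_eval :: "(int \<times> int) set \<Rightarrow> (int \<times> int \<Rightarrow> real) \<Rightarrow> real \<times> real \<Rightarrow> real" where
  "trop_eval A c x = Max ((\<lambda>w. fst (rp w) * fst x + snd (rp w) * snd x + c w) ` A)"

definition trop_argmax :: "(int \<times> int) set \<Rightarrow> (int \<times> int \<Rightarrow> real) \<Rightarrow> real \<times> real \<Rightarrow> (int \<times> int) set" where
  "trop_argmax A c x = {w \<in> A. fst (rp w) * fst x + snd (rp w) * snd x + c w = trop_eval A c x}"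

text \<open>This is the regular subdivision induced by c.\<close>

definition dual_polys :: "(int \<times> int) set \<Rightarrow> (int \<times> int \<Rightarrow> real) \<Rightarrow> (real \<times> real) set set" where
  "dual_polys A c = {convex hull (rp ` trop_argmax A c x) | x.
                       aff_dim (convex hull (rp ` trop_argmax A c x)) = 2}"

definition poly_vert :: "(real \<times> real) set \<Rightarrow> (int \<times> int) set" where
  "poly_vert P = {w. rp w extreme_point_of P}"

definition subdiv_vert :: "(int \<times> int) set \<Rightarrow> (int \<times> int \<Rightarrow> real) \<Rightarrow> (int \<times> int) set" where
  "subdiv_vert A c = (\<Union>P \<in> dual_polys A c. poly_vert P)"

definition is_triangle :: "(real \<times> real) set \<Rightarrow> bool" where
  "is_triangle P \<longleftrightarrow> card (poly_vert P) = 3"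

definition is_parallelogram :: "(real \<times> real) set \<Rightarrow> bool" where
  "is_parallelogram P \<longleftrightarrow> (\<exists>p q r s. poly_vert P = {p, q, r, s} \<and> card {p, q, r, s} = 4
                                   \<and> p + r = q + s)"

text \<open>Coefficient vectors indexed by V are functions vanishing outside V; they form a
  real vector space under pointwise operations.\<close>

definition fscale :: "real \<Rightarrow> ('a \<Rightarrow> real) \<Rightarrow> ('a \<Rightarrow> real)" where
  "fscale r f = (\<lambda>x. r * f x)"

definition same_subdiv_coeffs :: "(int \<times> int) set \<Rightarrow> (int \<times> int \<Rightarrow> real) \<Rightarrow> (int \<times> int \<Rightarrow> real) set" where
  "same_subdiv_coeffs A c =
     (let V = subdiv_vert A c in
      {c'. (\<forall>w. w \<notin> V \<longrightarrow> c' w = 0) \<and> dual_polys V c' = dual_polys A c})"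

text \<open>Rank: dimension of that set modulo adding a common constant (on V), i.e. the
  dimension of the direction space of its affine hull, taken in the quotient by the
  constant vector.\<close>

definition trop_rank :: "(int \<times> int) set \<Rightarrow> (int \<times> int \<Rightarrow> real) \<Rightarrow> int" where
  "trop_rank A c =
     (let V = subdiv_vert A c; R = same_subdiv_coeffs A c in
      int (vector_space.dim fscale
             ({c1 - c2 | c1 c2. c1 \<in> R \<and> c2 \<in> R} \<union> {(\<lambda>w. if w \<in> V then 1 else 0)})) - 1)"

end

theory Submission
  imports Defs
begin


interpretation fs: vector_space fscale
  by unfold_locales (auto simp: fscale_def fun_eq_iff algebra_simps)

lemma fscale_apply[simp]: "fscale r f x = r * f x" by (simp add: fscale_def)

lemma rp_inj: "inj rp"
  by (auto simp: inj_def rp_def prod_eq_iff)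

lemma rp_eq_iff[simp]: "rp u = rp v \<longleftrightarrow> u = v"
  using rp_inj by (auto dest: injD)

lemma argmax_eq:
  assumes "v \<in> trop_argmax A c x"
  shows "fst (rp v) * fst x + snd (rp v) * snd x + c v = trop_eval A c x"
  using assms by (simp add: trop_argmax_def)

lemma argmax_in: "v \<in> trop_argmax A c x \<Longrightarrow> v \<in> A"
  by (simp add: trop_argmax_def)

lemma argmax_ge:
  assumes "finite A" "v \<in> trop_argmax A c x" "w \<in> A"
  shows "fst (rp w) * fst x + snd (rp w) * snd x + c w \<le> fst (rp v) * fst x + snd (rp v) * snd x + c v"
proof -
  have "fst (rp w) * fst x + snd (rp w) * snd x + c w \<le> trop_eval A c x"
    unfolding trop_eval_def using assms by (intro Max_ge) auto
  with argmax_eq[OF assms(2)] show ?thesis by simp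
qed

lemma cell_obtain:
  assumes "P \<in> dual_polys A c"
  obtains x where "P = convex hull (rp ` trop_argmax A c x)"
  using assms by (auto simp: dual_polys_def)

lemma poly_vert_sub:
  assumes "P = convex hull (rp ` S)"
  shows "poly_vert P \<subseteq> S"
proof
  fix w assume "w \<in> poly_vert P"
  hence "rp w extreme_point_of convex hull (rp ` S)" using assms by (simp add: poly_vert_def)
  hence "rp w \<in> rp ` S" by (rule extreme_point_of_convex_hull)
  thus "w \<in> S" by auto
qed



lemma collinear_line:
  fixes a b c :: "real \<times> real"
  assumes "(\<alpha>, \<beta>) \<noteq> (0, 0)"
    and "\<forall>t\<in>{a,b,c}. \<alpha> * fst t + \<beta> * snd t + \<gamma> = 0"
  shows "collinear {a, b, c}"
  unfolding collinear_def
proof (intro exI[of _ "(-\<beta>, \<alpha>)"] ballI)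
  fix x y assume x: "x \<in> {a,b,c}" and y: "y \<in> {a,b,c}"
  have ex: "\<alpha> * fst x + \<beta> * snd x + \<gamma> = 0" "\<alpha> * fst y + \<beta> * snd y + \<gamma> = 0"
    using assms(2) x y by auto
  show "\<exists>c. x - y = c *\<^sub>R (- \<beta>, \<alpha>)"
  proof (cases "\<alpha> = 0")
    case True
    then have "\<beta> \<noteq> 0" using assms(1) by auto
    show ?thesis
      apply (rule exI[of _ "-(fst x - fst y)/\<beta>"])
    proof -
      have "\<beta> * snd x = \<beta> * snd y" using ex True by (simp add: eq_neg_iff_add_eq_0[symmetric])
      then have "snd x = snd y" using \<open>\<beta> \<noteq> 0\<close> by simp
      then show "x - y = (-(fst x - fst y)/\<beta>) *\<^sub>R (- \<beta>, \<alpha>)"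
        using True \<open>\<beta> \<noteq> 0\<close> by (auto simp: prod_eq_iff field_simps)
    qed
  next
    case False
    show ?thesis
      apply (rule exI[of _ "(snd x - snd y)/\<alpha>"])
      using ex False by (auto simp: prod_eq_iff field_simps)
  qed
qed

lemma not_extreme_between:
  assumes "between (a, b) x" "x \<noteq> a" "x \<noteq> b" "a \<in> S" "b \<in> S"
  shows "\<not> x extreme_point_of S"
  using assms by (auto simp: extreme_point_of_def between_mem_segment open_segment_def)

lemma three_extreme:
  assumes "u \<in> poly_vert P" "v \<in> poly_vert P" "w \<in> poly_vert P"
    and "u \<noteq> v" "u \<noteq> w" "v \<noteq> w"
    and "\<forall>t\<in>{u,v,w}. \<alpha> * fst (rp t) + \<beta> * snd (rp t) + \<gamma> = 0"
  shows "\<alpha> = 0 \<and> \<beta> = 0"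
proof (rule ccontr)
  assume "\<not> (\<alpha> = 0 \<and> \<beta> = 0)"
  then have "collinear {rp u, rp v, rp w}"
    by (intro collinear_line[where \<gamma> = \<gamma>]) (use assms(7) in auto)
  then have "between (rp v, rp w) (rp u) \<or> between (rp w, rp u) (rp v) \<or> between (rp u, rp v) (rp w)"
    by (simp add: collinear_between_cases)
  moreover have e: "rp u extreme_point_of P" "rp v extreme_point_of P" "rp w extreme_point_of P"
    using assms(1-3) by (auto simp: poly_vert_def)
  moreover have "rp u \<in> P" "rp v \<in> P" "rp w \<in> P" using e by (auto simp: extreme_point_of_def)
  ultimately show False
    using not_extreme_between assms(4-6) by (metis rp_eq_iff)
qed



lemma cone_lex_aux:
  fixes a1 a2 b1 b2 :: real
  assumes D: "a1 * b2 - a2 * b1 \<noteq> 0" and b2: "b2 \<noteq> 0" and a2: "a2 \<noteq> 0"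
  shows "\<exists>e1 e2. (e1 = 1 \<or> e1 = -1) \<and> (e2 = 1 \<or> e2 = -1) \<and>
     (\<forall>z1 z2. e1 * (a1*z1 + a2*z2) \<ge> 0 \<longrightarrow> e2 * (b1*z1 + b2*z2) \<ge> 0 \<longrightarrow> (z1, z2) \<noteq> (0,0)
        \<longrightarrow> z1 > 0 \<or> (z1 = 0 \<and> z2 > 0))"
proof -
  define d where "d = a1 * b2 - a2 * b1"
  define X where "X = b2 * d"
  define Y where "Y = - a2 * d"
  have X0: "X \<noteq> 0" "Y \<noteq> 0" using D b2 a2 by (auto simp: X_def Y_def d_def)
  define e1 :: real where "e1 = (if X > 0 then 1 else -1)"
  define e2 :: real where "e2 = (if Y > 0 then 1 else -1)"
  have "\<forall>z1 z2. e1 * (a1*z1 + a2*z2) \<ge> 0 \<longrightarrow> e2 * (b1*z1 + b2*z2) \<ge> 0 \<longrightarrow> (z1, z2) \<noteq> (0,0)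
        \<longrightarrow> z1 > 0 \<or> (z1 = 0 \<and> z2 > 0)"
  proof (intro allI impI)
    fix z1 z2 assume h1: "e1 * (a1*z1 + a2*z2) \<ge> 0" and h2: "e2 * (b1*z1 + b2*z2) \<ge> 0"
      and nz: "(z1, z2) \<noteq> (0,0)"
    define A where "A = a1*z1 + a2*z2"
    define B where "B = b1*z1 + b2*z2"
    have id: "d * d * z1 = X * A + Y * B"
      by (simp add: X_def Y_def A_def B_def d_def algebra_simps)
    have XA: "X * A \<ge> 0"
      using h1 X0 unfolding e1_def A_def[symmetric]
      by (cases "X > 0") (auto simp: mult_nonneg_nonneg mult_nonpos_nonpos)
    have YB: "Y * B \<ge> 0"
      using h2 X0 unfolding e2_def B_def[symmetric]
      by (cases "Y > 0") (auto simp: mult_nonneg_nonneg mult_nonpos_nonpos)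
    have "d \<noteq> 0" using D d_def by simp
    hence dd: "d * d > 0" by (simp add: not_square_less_zero order_less_le)
    have "d * d * z1 \<ge> 0" using id XA YB by linarith
    hence z1: "z1 \<ge> 0" using dd by (simp add: zero_le_mult_iff)
    show "z1 > 0 \<or> (z1 = 0 \<and> z2 > 0)"
    proof (rule ccontr)
      assume "\<not> (z1 > 0 \<or> (z1 = 0 \<and> z2 > 0))"
      hence "z1 = 0" using z1 by auto
      hence "X * A + Y * B = 0" using id by simp
      hence "X * A = 0" using XA YB by linarith
      hence "A = 0" using X0 by auto
      hence "a2 * z2 = 0" using \<open>z1 = 0\<close> A_def by simp
      hence "z2 = 0" using a2 by simp
      thus False using nz \<open>z1 = 0\<close> by simp
    qed
  qed
  thus ?thesis unfolding e1_def e2_def by (intro exI[of _ e1] exI[of _ e2]) (auto simp: e1_def e2_def)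
qed

lemma cone_lex:
  fixes a1 a2 b1 b2 :: real
  assumes D: "a1 * b2 - a2 * b1 \<noteq> 0"
  shows "\<exists>e1 e2. (e1 = 1 \<or> e1 = -1) \<and> (e2 = 1 \<or> e2 = -1) \<and>
     (\<forall>z1 z2. e1 * (a1*z1 + a2*z2) \<ge> 0 \<longrightarrow> e2 * (b1*z1 + b2*z2) \<ge> 0 \<longrightarrow> (z1, z2) \<noteq> (0,0)
        \<longrightarrow> z1 > 0 \<or> (z1 = 0 \<and> z2 > 0))"
proof (cases "b2 = 0")
  case True
  hence a2: "a2 \<noteq> 0" and b1: "b1 \<noteq> 0" using D by auto
  define e1 :: real where "e1 = (if a2 > 0 then 1 else -1)"
  define e2 :: real where "e2 = (if b1 > 0 then 1 else -1)"
  have "\<forall>z1 z2. e1 * (a1*z1 + a2*z2) \<ge> 0 \<longrightarrow> e2 * (b1*z1 + b2*z2) \<ge> 0 \<longrightarrow> (z1, z2) \<noteq> (0,0)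
        \<longrightarrow> z1 > 0 \<or> (z1 = 0 \<and> z2 > 0)"
  proof (intro allI impI)
    fix z1 z2 assume h1: "e1 * (a1*z1 + a2*z2) \<ge> 0" and h2: "e2 * (b1*z1 + b2*z2) \<ge> 0"
      and nz: "(z1, z2) \<noteq> (0,0)"
    have "e2 * b1 * z1 \<ge> 0" using h2 True by (simp add: algebra_simps)
    moreover have "e2 * b1 > 0" using b1 by (auto simp: e2_def)
    ultimately have z1: "z1 \<ge> 0" by (simp add: zero_le_mult_iff)
    show "z1 > 0 \<or> (z1 = 0 \<and> z2 > 0)"
    proof (cases "z1 = 0")
      case True
      hence "e1 * a2 * z2 \<ge> 0" using h1 by (simp add: algebra_simps)
      moreover have "e1 * a2 > 0" using a2 by (auto simp: e1_def)
      ultimately have "z2 \<ge> 0" by (simp add: zero_le_mult_iff)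
      thus ?thesis using nz True by auto
    qed (use z1 in auto)
  qed
  thus ?thesis by (intro exI[of _ e1] exI[of _ e2]) (auto simp: e1_def e2_def)
next
  case False
  note b2 = False
  show ?thesis
  proof (cases "a2 = 0")
    case False
    then show ?thesis using cone_lex_aux[OF D b2 False] by blast
  next
    case True
    hence a1: "a1 \<noteq> 0" using D by auto
    define e1 :: real where "e1 = (if a1 > 0 then 1 else -1)"
    define e2 :: real where "e2 = (if b2 > 0 then 1 else -1)"
    have "\<forall>z1 z2. e1 * (a1*z1 + a2*z2) \<ge> 0 \<longrightarrow> e2 * (b1*z1 + b2*z2) \<ge> 0 \<longrightarrow> (z1, z2) \<noteq> (0,0)
          \<longrightarrow> z1 > 0 \<or> (z1 = 0 \<and> z2 > 0)"
    proof (intro allI impI)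
      fix z1 z2 assume h1: "e1 * (a1*z1 + a2*z2) \<ge> 0" and h2: "e2 * (b1*z1 + b2*z2) \<ge> 0"
        and nz: "(z1, z2) \<noteq> (0,0)"
      have "e1 * a1 * z1 \<ge> 0" using h1 True by (simp add: algebra_simps)
      moreover have "e1 * a1 > 0" using a1 by (auto simp: e1_def)
      ultimately have z1: "z1 \<ge> 0" by (simp add: zero_le_mult_iff)
      show "z1 > 0 \<or> (z1 = 0 \<and> z2 > 0)"
      proof (cases "z1 = 0")
        case True
        hence "e2 * b2 * z2 \<ge> 0" using h2 by (simp add: algebra_simps)
        moreover have "e2 * b2 > 0" using b2 by (auto simp: e2_def)
        ultimately have "z2 \<ge> 0" by (simp add: zero_le_mult_iff)
        thus ?thesis using nz True by auto
      qed (use z1 in auto)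
    qed
    thus ?thesis by (intro exI[of _ e1] exI[of _ e2]) (auto simp: e1_def e2_def)
  qed
qed



definition lexless :: "real \<times> real \<Rightarrow> real \<times> real \<Rightarrow> bool" where
  "lexless x y \<longleftrightarrow> fst x < fst y \<or> (fst x = fst y \<and> snd x < snd y)"

definition xs :: "(int \<times> int) set \<Rightarrow> (int \<times> int \<Rightarrow> real) \<Rightarrow> (real \<times> real) set \<Rightarrow> real \<times> real" where
  "xs A c P = (SOME x. P = convex hull (rp ` trop_argmax A c x))"

lemma xs_spec: "P \<in> dual_polys A c \<Longrightarrow> P = convex hull (rp ` trop_argmax A c (xs A c P))"
  unfolding xs_def by (rule someI_ex) (auto simp: dual_polys_def)

lemma vert_argmax: "P \<in> dual_polys A c \<Longrightarrow> poly_vert P \<subseteq> trop_argmax A c (xs A c P)"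
  by (rule poly_vert_sub[OF xs_spec])

lemma vert_in_A: "P \<in> dual_polys A c \<Longrightarrow> poly_vert P \<subseteq> A"
  using vert_argmax argmax_in by blast

lemma lexless_asym: "lexless x y \<Longrightarrow> \<not> lexless y x"
  by (auto simp: lexless_def)

lemma lexless_trans: "lexless x y \<Longrightarrow> lexless y z \<Longrightarrow> lexless x z"
  by (auto simp: lexless_def)

lemma normal_ineq:
  assumes "finite A" "P \<in> dual_polys A c" "Q \<in> dual_polys A c"
    and "v \<in> poly_vert P" "v \<in> poly_vert Q" "w \<in> poly_vert P"
  shows "(of_int (fst v) - of_int (fst w)) * (fst (xs A c Q) - fst (xs A c P))
       + (of_int (snd v) - of_int (snd w)) * (snd (xs A c Q) - snd (xs A c P)) \<ge> (0::real)"
proof -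
  have vQ: "v \<in> trop_argmax A c (xs A c Q)" using vert_argmax[OF assms(3)] assms(5) by auto
  have vP: "v \<in> trop_argmax A c (xs A c P)" using vert_argmax[OF assms(2)] assms(4) by auto
  have wP: "w \<in> trop_argmax A c (xs A c P)" using vert_argmax[OF assms(2)] assms(6) by auto
  have wA: "w \<in> A" using argmax_in wP by blast
  have 1: "fst (rp w) * fst (xs A c Q) + snd (rp w) * snd (xs A c Q) + c w
      \<le> fst (rp v) * fst (xs A c Q) + snd (rp v) * snd (xs A c Q) + c v"
    by (rule argmax_ge[OF assms(1) vQ wA])
  have 2: "fst (rp v) * fst (xs A c P) + snd (rp v) * snd (xs A c P) + c v
      = fst (rp w) * fst (xs A c P) + snd (rp w) * snd (xs A c P) + c w"
    using argmax_eq[OF vP] argmax_eq[OF wP] by simp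
  show ?thesis using 1 2 by (simp add: rp_def algebra_simps)
qed

lemma par_nbrs:
  assumes "poly_vert P = {p, q, r, s}" "p + r = q + s"
    and "e1 = 1 \<or> e1 = -1" "e2 = 1 \<or> e2 = (-1::real)"
  shows "\<exists>v\<in>poly_vert P. \<exists>w1\<in>poly_vert P. \<exists>w2\<in>poly_vert P.
     (of_int (fst v) - of_int (fst w1) = e1 * of_int (fst q - fst p)) \<and>
     (of_int (snd v) - of_int (snd w1) = e1 * of_int (snd q - snd p)) \<and>
     (of_int (fst v) - of_int (fst w2) = e2 * of_int (fst s - fst p)) \<and>
     (of_int (snd v) - of_int (snd w2) = e2 * of_int (snd s - snd p))"
proof -
  have r1: "fst r = fst q + fst s - fst p" and r2: "snd r = snd q + snd s - snd p"
    using assms(2) by (auto simp: prod_eq_iff)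
  from assms(3,4) consider "e1 = 1" "e2 = 1" | "e1 = 1" "e2 = -1" | "e1 = -1" "e2 = 1" | "e1 = -1" "e2 = -1"
    by blast
  then show ?thesis
  proof cases
    case 1 show ?thesis
      by (rule bexI[of _ r], rule bexI[of _ s], rule bexI[of _ q]) (use 1 assms(1) r1 r2 in auto)
  next
    case 2 show ?thesis
      by (rule bexI[of _ q], rule bexI[of _ p], rule bexI[of _ r]) (use 2 assms(1) r1 r2 in auto)
  next
    case 3 show ?thesis
      by (rule bexI[of _ s], rule bexI[of _ r], rule bexI[of _ p]) (use 3 assms(1) r1 r2 in auto)
  next
    case 4 show ?thesis
      by (rule bexI[of _ p], rule bexI[of _ q], rule bexI[of _ s]) (use 4 assms(1) r1 r2 in auto)
  qed
qed

lemma private_vertex: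
  assumes "finite A" "P \<in> dual_polys A c" "is_parallelogram P"
  shows "\<exists>v\<in>poly_vert P. \<forall>Q\<in>dual_polys A c. v \<in> poly_vert Q \<longrightarrow> Q \<noteq> P \<longrightarrow> lexless (xs A c P) (xs A c Q)"
proof -
  obtain p q r s where pv: "poly_vert P = {p, q, r, s}" "card {p, q, r, s} = 4" "p + r = q + s"
    using assms(3) unfolding is_parallelogram_def by blast
  have dist: "p \<noteq> q" "p \<noteq> s" "q \<noteq> s" using pv(2)
    by (auto simp: card_insert_if split: if_splits)
  define a1 where "a1 = real_of_int (fst q - fst p)"
  define a2 where "a2 = real_of_int (snd q - snd p)"
  define b1 where "b1 = real_of_int (fst s - fst p)"
  define b2 where "b2 = real_of_int (snd s - snd p)"
  have det: "a1 * b2 - a2 * b1 \<noteq> 0"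
  proof
    assume d0: "a1 * b2 - a2 * b1 = 0"
    let ?g = "- (- a2 * fst (rp p) + a1 * snd (rp p))"
    have "\<forall>t\<in>{p,q,s}. (- a2) * fst (rp t) + a1 * snd (rp t) + ?g = 0"
      using d0 by (auto simp: rp_def a1_def a2_def b1_def b2_def algebra_simps)
    hence "- a2 = 0 \<and> a1 = 0"
      by (intro three_extreme[of p P q s]) (use pv(1) dist in auto)
    hence "q = p" by (auto simp: a1_def a2_def prod_eq_iff)
    thus False using dist by simp
  qed
  obtain e1 e2 where e: "e1 = 1 \<or> e1 = -1" "e2 = 1 \<or> e2 = -1"
    and cone: "\<forall>z1 z2. e1 * (a1*z1 + a2*z2) \<ge> 0 \<longrightarrow> e2 * (b1*z1 + b2*z2) \<ge> 0 \<longrightarrow> (z1, z2) \<noteq> (0,0)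
        \<longrightarrow> z1 > 0 \<or> (z1 = 0 \<and> z2 > 0)"
    using cone_lex[OF det] by blast
  obtain v w1 w2 where vw: "v \<in> poly_vert P" "w1 \<in> poly_vert P" "w2 \<in> poly_vert P"
    "of_int (fst v) - of_int (fst w1) = e1 * a1" "of_int (snd v) - of_int (snd w1) = e1 * a2"
    "of_int (fst v) - of_int (fst w2) = e2 * b1" "of_int (snd v) - of_int (snd w2) = e2 * b2"
    using par_nbrs[OF pv(1) pv(3) e] unfolding a1_def a2_def b1_def b2_def by blast
  show ?thesis
  proof (intro bexI[OF _ vw(1)] ballI impI)
    fix Q assume Q: "Q \<in> dual_polys A c" "v \<in> poly_vert Q" "Q \<noteq> P"
    define z1 where "z1 = fst (xs A c Q) - fst (xs A c P)"
    define z2 where "z2 = snd (xs A c Q) - snd (xs A c P)"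
    have i1: "e1 * (a1*z1 + a2*z2) \<ge> 0"
      using normal_ineq[OF assms(1,2) Q(1) vw(1) Q(2) vw(2)] vw(4,5)
      unfolding z1_def z2_def by (simp add: algebra_simps)
    have i2: "e2 * (b1*z1 + b2*z2) \<ge> 0"
      using normal_ineq[OF assms(1,2) Q(1) vw(1) Q(2) vw(3)] vw(6,7)
      unfolding z1_def z2_def by (simp add: algebra_simps)
    have "(z1, z2) \<noteq> (0, 0)"
    proof
      assume "(z1, z2) = (0, 0)"
      hence "xs A c Q = xs A c P" by (auto simp: z1_def z2_def prod_eq_iff)
      hence "Q = P" using xs_spec[OF Q(1)] xs_spec[OF assms(2)] by simp
      thus False using Q(3) by simp
    qed
    hence "z1 > 0 \<or> (z1 = 0 \<and> z2 > 0)" using cone i1 i2 by blast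
    thus "lexless (xs A c P) (xs A c Q)" by (auto simp: lexless_def z1_def z2_def)
  qed
qed



lemma sum_fun_apply': "(\<Sum>b\<in>B. g b) w = (\<Sum>b\<in>B. (g b :: 'a \<Rightarrow> real) w)"
  by (induct B rule: infinite_finite_induct) auto

lemma restrict_in_span:
  assumes "finite B"
  shows "(\<lambda>w. if w \<in> B then f w else 0) \<in> fs.span ((\<lambda>b w. if w = b then 1 else (0::real)) ` B)"
proof -
  have eq: "(\<lambda>w. if w \<in> B then f w else 0) = (\<Sum>b\<in>B. fscale (f b) (\<lambda>w. if w = b then 1 else (0::real)))"
  proof (rule ext)
    fix w
    have "(\<Sum>b\<in>B. f b * (if w = b then 1 else 0)) = (\<Sum>b\<in>B. if b = w then f b else 0)"
      by (rule sum.cong) auto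
    also have "\<dots> = (if w \<in> B then f w else 0)" using assms by (simp add: sum.delta)
    finally show "(if w \<in> B then f w else 0) = (\<Sum>b\<in>B. fscale (f b) (\<lambda>w. if w = b then 1 else (0::real))) w"
      by (simp add: sum_fun_apply')
  qed
  show ?thesis unfolding eq
    by (intro fs.span_sum fs.span_scale fs.span_base) auto
qed

lemma dim_le_restrict:
  fixes S :: "('a \<Rightarrow> real) set"
  assumes "fs.span S \<subseteq> L" "finite B"
    and inj: "\<And>f. f \<in> L \<Longrightarrow> (\<forall>b\<in>B. f b = 0) \<Longrightarrow> f = 0"
  shows "fs.dim S \<le> card B"
proof -
  obtain T where T: "T \<subseteq> S" "fs.independent T" "S \<subseteq> fs.span T" "card T = fs.dim S"
    using fs.basis_exists by blast
  define r where "r f = (\<lambda>w. if w \<in> B then f w else (0::real))" for f :: "'a \<Rightarrow> real"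
  interpret lin: Vector_Spaces.linear fscale fscale r
    by unfold_locales (auto simp: r_def fun_eq_iff)
  have spT: "fs.span T \<subseteq> fs.span S" using T(1) fs.span_mono by blast
  have inj_r: "inj_on r (fs.span T)"
  proof (rule inj_onI)
    fix f g assume f: "f \<in> fs.span T" and g: "g \<in> fs.span T" and e: "r f = r g"
    have "f - g \<in> fs.span T" using f g fs.span_diff by blast
    hence "f - g \<in> L" using spT assms(1) by blast
    moreover have "\<forall>b\<in>B. (f - g) b = 0" proof
      fix b assume "b \<in> B"
      have "r f b = r g b" using e by simp
      thus "(f - g) b = 0" using \<open>b \<in> B\<close> by (simp add: r_def)
    qed
    ultimately have "f - g = 0" by (rule inj)
    thus "f = g" by simp
  qed
  have ind: "fs.independent (r ` T)"
    by (rule lin.independent_injective_image[OF T(2) inj_r])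
  have sub: "r ` T \<subseteq> fs.span ((\<lambda>b w. if w = b then 1 else (0::real)) ` B)"
    using restrict_in_span[OF assms(2)] by (auto simp: r_def)
  have bd: "finite (r ` T) \<and> card (r ` T) \<le> card ((\<lambda>b w. if w = b then 1 else (0::real)) ` B)"
    by (rule fs.independent_span_bound[OF _ ind sub]) (use assms(2) in simp)
  have injT: "inj_on r T" using inj_r fs.span_superset inj_on_subset by blast
  have "card (r ` T) = card T" using card_image[OF injT] .
  moreover have "card ((\<lambda>b w. if w = b then 1 else (0::real)) ` B) \<le> card B" by (rule card_image_le[OF assms(2)])
  ultimately show ?thesis using bd T(4) by linarith
qed



definition Laff :: "(int \<times> int) set \<Rightarrow> (real \<times> real) set set \<Rightarrow> (int \<times> int \<Rightarrow> real) set" where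
  "Laff V C = {f. (\<forall>w. w \<notin> V \<longrightarrow> f w = 0) \<and>
     (\<forall>P\<in>C. \<exists>\<alpha> \<beta> \<gamma>. \<forall>v\<in>poly_vert P. f v = \<alpha> * fst (rp v) + \<beta> * snd (rp v) + \<gamma>)}"

lemma Laff_subspace: "fs.subspace (Laff V C)"
  unfolding fs.subspace_def
proof (intro conjI ballI allI)
  show "0 \<in> Laff V C" unfolding Laff_def
    by (auto intro!: exI[of _ 0])
next
  fix f g assume f: "f \<in> Laff V C" and g: "g \<in> Laff V C"
  show "f + g \<in> Laff V C" unfolding Laff_def
  proof (intro CollectI conjI allI impI ballI)
    fix w assume w: "w \<notin> V"
    have "f w = 0" "g w = 0" using f g w unfolding Laff_def by blast+
    thus "(f + g) w = 0" by simp
  next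
    fix P assume P: "P \<in> C"
    obtain a1 b1 c1 where 1: "\<forall>v\<in>poly_vert P. f v = a1 * fst (rp v) + b1 * snd (rp v) + c1"
      using f P unfolding Laff_def by blast
    obtain a2 b2 c2 where 2: "\<forall>v\<in>poly_vert P. g v = a2 * fst (rp v) + b2 * snd (rp v) + c2"
      using g P unfolding Laff_def by blast
    show "\<exists>\<alpha> \<beta> \<gamma>. \<forall>v\<in>poly_vert P. (f + g) v = \<alpha> * fst (rp v) + \<beta> * snd (rp v) + \<gamma>"
      by (rule exI[of _ "a1 + a2"], rule exI[of _ "b1 + b2"], rule exI[of _ "c1 + c2"])
        (use 1 2 in \<open>auto simp: algebra_simps\<close>)
  qed
next
  fix r f assume f: "f \<in> Laff V C"
  show "fscale r f \<in> Laff V C" unfolding Laff_def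
  proof (intro CollectI conjI allI impI ballI)
    fix w assume w: "w \<notin> V"
    have "f w = 0" using f w unfolding Laff_def by blast
    thus "fscale r f w = 0" by simp
  next
    fix P assume P: "P \<in> C"
    obtain a1 b1 c1 where 1: "\<forall>v\<in>poly_vert P. f v = a1 * fst (rp v) + b1 * snd (rp v) + c1"
      using f P unfolding Laff_def by blast
    show "\<exists>\<alpha> \<beta> \<gamma>. \<forall>v\<in>poly_vert P. fscale r f v = \<alpha> * fst (rp v) + \<beta> * snd (rp v) + \<gamma>"
      by (rule exI[of _ "r * a1"], rule exI[of _ "r * b1"], rule exI[of _ "r * c1"])
        (use 1 in \<open>auto simp: algebra_simps\<close>)
  qed
qed

lemma coeffs_in_Laff:
  assumes "c' \<in> same_subdiv_coeffs A c"
  shows "c' \<in> Laff (subdiv_vert A c) (dual_polys A c)"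
proof -
  let ?V = "subdiv_vert A c"
  have z: "\<forall>w. w \<notin> ?V \<longrightarrow> c' w = 0" and eq: "dual_polys ?V c' = dual_polys A c"
    using assms by (auto simp: same_subdiv_coeffs_def Let_def)
  show ?thesis unfolding Laff_def
  proof (intro CollectI conjI z ballI)
    fix P assume "P \<in> dual_polys A c"
    hence "P \<in> dual_polys ?V c'" using eq by simp
    then obtain x where x: "P = convex hull (rp ` trop_argmax ?V c' x)" by (rule cell_obtain)
    have sub: "poly_vert P \<subseteq> trop_argmax ?V c' x" by (rule poly_vert_sub[OF x])
    show "\<exists>\<alpha> \<beta> \<gamma>. \<forall>v\<in>poly_vert P. c' v = \<alpha> * fst (rp v) + \<beta> * snd (rp v) + \<gamma>"
    proof (intro exI ballI)
      fix v assume "v \<in> poly_vert P"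
      hence "v \<in> trop_argmax ?V c' x" using sub by auto
      from argmax_eq[OF this]
      show "c' v = (- fst x) * fst (rp v) + (- snd x) * snd (rp v) + trop_eval ?V c' x"
        by (simp add: algebra_simps)
    qed
  qed
qed

lemma indicator_in_Laff:
  "(\<lambda>w. if w \<in> subdiv_vert A c then 1 else 0) \<in> Laff (subdiv_vert A c) (dual_polys A c)"
  unfolding Laff_def
proof (intro CollectI conjI allI impI ballI)
  fix P assume P: "P \<in> dual_polys A c"
  show "\<exists>\<alpha> \<beta> \<gamma>. \<forall>v\<in>poly_vert P. (if v \<in> subdiv_vert A c then 1 else 0) = \<alpha> * fst (rp v) + \<beta> * snd (rp v) + \<gamma>"
    by (rule exI[of _ 0], rule exI[of _ 0], rule exI[of _ 1]) (use P in \<open>auto simp: subdiv_vert_def\<close>)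
qed auto

lemma span_S_Laff:
  "fs.span ({c1 - c2 | c1 c2. c1 \<in> same_subdiv_coeffs A c \<and> c2 \<in> same_subdiv_coeffs A c}
      \<union> {(\<lambda>w. if w \<in> subdiv_vert A c then 1 else 0)}) \<subseteq> Laff (subdiv_vert A c) (dual_polys A c)"
  apply (rule fs.span_minimal[OF _ Laff_subspace])
  using coeffs_in_Laff indicator_in_Laff fs.subspace_diff[OF Laff_subspace] by blast



locale tsetup =
  fixes A :: "(int \<times> int) set" and c :: "int \<times> int \<Rightarrow> real"
    and ds :: "(real \<times> real) set list" and k :: nat
  assumes finA: "finite A" and dist: "distinct ds" and setds: "set ds = dual_polys A c"
    and kle: "k \<le> length ds"
    and tp: "\<forall>i < length ds. (i < k \<longleftrightarrow> is_triangle (ds ! i) \<or> is_parallelogram (ds ! i))"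
begin

definition pv where
  "pv P = (SOME v. v \<in> poly_vert P \<and> (\<forall>Q\<in>dual_polys A c. v \<in> poly_vert Q \<longrightarrow> Q \<noteq> P \<longrightarrow> lexless (xs A c P) (xs A c Q)))"
definition oldv where "oldv i = (\<Union>j<i. poly_vert (ds ! j))"
definition newv where "newv i = poly_vert (ds ! i) - oldv i"
definition mc where "mc i = card (poly_vert (ds ! i) \<inter> oldv i)"
definition keep where "keep i = (SOME K. K \<subseteq> newv i \<and> card K = min (card (newv i)) (3 - mc i))"
definition elim where
  "elim i = (if i < k then (if is_parallelogram (ds ! i) then {pv (ds ! i)} else {}) else newv i - keep i)"
definition Bs where "Bs = subdiv_vert A c - (\<Union>i<length ds. elim i)"

lemma cell_ds: "i < length ds \<Longrightarrow> ds ! i \<in> dual_polys A c"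
  using nth_mem[of i ds] setds by simp

lemma vert_fin: "P \<in> dual_polys A c \<Longrightarrow> finite (poly_vert P)"
  by (rule finite_subset[OF vert_in_A finA])

lemma vert_V: "P \<in> dual_polys A c \<Longrightarrow> poly_vert P \<subseteq> subdiv_vert A c"
  by (auto simp: subdiv_vert_def)

lemma finV: "finite (subdiv_vert A c)"
proof (rule finite_subset[OF _ finA])
  show "subdiv_vert A c \<subseteq> A" using vert_in_A by (auto simp: subdiv_vert_def)
qed

lemma finC: "finite (dual_polys A c)"
  unfolding setds[symmetric] by simp

lemma pv: "P \<in> dual_polys A c \<Longrightarrow> is_parallelogram P \<Longrightarrow>
   pv P \<in> poly_vert P \<and> (\<forall>Q\<in>dual_polys A c. pv P \<in> poly_vert Q \<longrightarrow> Q \<noteq> P \<longrightarrow> lexless (xs A c P) (xs A c Q))"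
proof -
  assume a: "P \<in> dual_polys A c" "is_parallelogram P"
  show ?thesis unfolding pv_def by (rule someI_ex[OF private_vertex[OF finA a, unfolded Bex_def]])
qed

lemma keep: assumes "i < length ds"
  shows "keep i \<subseteq> newv i \<and> card (keep i) = min (card (newv i)) (3 - mc i)"
proof -
  have "finite (newv i)" using vert_fin[OF cell_ds[OF assms]] by (simp add: newv_def)
  have "min (card (newv i)) (3 - mc i) \<le> card (newv i)" by simp
  then obtain T where T: "T \<subseteq> newv i" "card T = min (card (newv i)) (3 - mc i)"
    by (rule obtain_subset_with_card_n)
  show ?thesis unfolding keep_def
    by (rule someI[where P = "\<lambda>K. K \<subseteq> newv i \<and> card K = min (card (newv i)) (3 - mc i)", OF conjI[OF T]])
qed

lemma par_idx: "P \<in> dual_polys A c \<Longrightarrow> is_parallelogram P \<Longrightarrow> \<exists>i<k. i < length ds \<and> ds ! i = P"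
proof -
  assume a: "P \<in> dual_polys A c" "is_parallelogram P"
  then have "P \<in> set ds" using setds by simp
  then obtain i where i: "i < length ds" "ds ! i = P" by (auto simp: in_set_conv_nth)
  have "i < k" using tp i a(2) by auto
  thus ?thesis using i by blast
qed

lemma old_mem: "u \<in> poly_vert (ds ! j) \<Longrightarrow> j < i \<Longrightarrow> u \<in> oldv i"
  by (auto simp: oldv_def)

lemma elim_sub: "i < length ds \<Longrightarrow> elim i \<subseteq> poly_vert (ds ! i)"
proof -
  assume i: "i < length ds"
  show ?thesis
  proof (cases "i < k")
    case True
    show ?thesis
    proof (cases "is_parallelogram (ds ! i)")
      case True
      thus ?thesis using pv[OF cell_ds[OF i] True] \<open>i < k\<close> by (simp add: elim_def)
    qed (use True in \<open>simp add: elim_def\<close>)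
  next
    case False thus ?thesis by (auto simp: elim_def newv_def)
  qed
qed

lemma elim_new: "\<not> i < k \<Longrightarrow> elim i \<subseteq> newv i"
  by (auto simp: elim_def)

lemma elim_par: "j < k \<Longrightarrow> u \<in> elim j \<Longrightarrow> is_parallelogram (ds ! j) \<and> u = pv (ds ! j)"
  by (auto simp: elim_def split: if_splits)

lemma elim_disj_lt: assumes "i < j" "j < length ds" shows "elim i \<inter> elim j = {}"
proof (cases "j < k")
  case False
  have "elim j \<subseteq> newv j" using elim_new[OF False] .
  moreover have "elim i \<subseteq> oldv j" using elim_sub[of i] assms by (auto simp: oldv_def)
  ultimately show ?thesis by (auto simp: newv_def)
next
  case True
  show ?thesis
  proof (rule ccontr)
    assume "elim i \<inter> elim j \<noteq> {}"
    then obtain u where u: "u \<in> elim i" "u \<in> elim j" by blast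
    have pi: "is_parallelogram (ds ! i)" "u = pv (ds ! i)" using elim_par[of i u] u True assms by auto
    have pj: "is_parallelogram (ds ! j)" "u = pv (ds ! j)" using elim_par[of j u] u True by auto
    have ne: "ds ! i \<noteq> ds ! j" using dist assms by (simp add: nth_eq_iff_index_eq)
    have ci: "ds ! i \<in> dual_polys A c" and cj: "ds ! j \<in> dual_polys A c" using cell_ds assms by auto
    have Hi: "\<forall>Q\<in>dual_polys A c. pv (ds ! i) \<in> poly_vert Q \<longrightarrow> Q \<noteq> ds ! i \<longrightarrow> lexless (xs A c (ds ! i)) (xs A c Q)"
      using pv[OF ci pi(1)] by (rule conjunct2)
    have Hj: "\<forall>Q\<in>dual_polys A c. pv (ds ! j) \<in> poly_vert Q \<longrightarrow> Q \<noteq> ds ! j \<longrightarrow> lexless (xs A c (ds ! j)) (xs A c Q)"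
      using pv[OF cj pj(1)] by (rule conjunct2)
    have ui: "pv (ds ! j) \<in> poly_vert (ds ! i)" using pv[OF ci pi(1)] pi(2) pj(2) by simp
    have uj: "pv (ds ! i) \<in> poly_vert (ds ! j)" using pv[OF cj pj(1)] pi(2) pj(2) by simp
    have "lexless (xs A c (ds ! i)) (xs A c (ds ! j))"
      using Hi[rule_format, OF cj uj] ne by simp
    moreover have "lexless (xs A c (ds ! j)) (xs A c (ds ! i))"
      using Hj[rule_format, OF ci ui] ne by simp
    ultimately show False using lexless_asym by simp
  qed
qed

lemma elim_disj: "i < length ds \<Longrightarrow> j < length ds \<Longrightarrow> i \<noteq> j \<Longrightarrow> elim i \<inter> elim j = {}"
proof -
  assume a: "i < length ds" "j < length ds" "i \<noteq> j"
  show ?thesis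
  proof (cases "i < j")
    case True thus ?thesis using elim_disj_lt a by simp
  next
    case False hence "j < i" using a by simp
    thus ?thesis using elim_disj_lt[of j i] a by (simp add: Int_commute)
  qed
qed

lemma notB: "u \<in> subdiv_vert A c \<Longrightarrow> u \<notin> Bs \<Longrightarrow> \<exists>j<length ds. u \<in> elim j"
  by (auto simp: Bs_def)

end



context tsetup begin

lemma card4_dist:
  assumes "card {p, q, r, s} = 4"
  shows "p \<noteq> q \<and> p \<noteq> r \<and> p \<noteq> s \<and> q \<noteq> r \<and> q \<noteq> s \<and> r \<noteq> s"
  using assms by (auto simp: card_insert_if split: if_splits)

lemma stepA:
  assumes f: "f \<in> Laff (subdiv_vert A c) (dual_polys A c)" and zB: "\<forall>b\<in>Bs. f b = 0"
  shows "P \<in> dual_polys A c \<Longrightarrow> is_parallelogram P \<Longrightarrow> f (pv P) = 0"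
proof (induction "card {Q \<in> dual_polys A c. lexless (xs A c Q) (xs A c P)}" arbitrary: P rule: less_induct)
  case (less P)
  have oth: "f u = 0" if u: "u \<in> poly_vert P" "u \<noteq> pv P" for u
  proof -
    have uV: "u \<in> subdiv_vert A c" using vert_V[OF less.prems(1)] u(1) by blast
    show "f u = 0"
    proof (cases "u \<in> Bs")
      case True thus ?thesis using zB by blast
    next
      case False
      then obtain j where j: "j < length ds" "u \<in> elim j" using notB[OF uV] by blast
      obtain i where i: "i < k" "i < length ds" "ds ! i = P" using par_idx[OF less.prems] by blast
      have jk: "j < k"
      proof (rule ccontr)
        assume njk: "\<not> j < k"
        hence "u \<in> newv j" using elim_new j(2) by blast
        moreover have "u \<in> oldv j" using old_mem[of u i j] u(1) i njk by auto
        ultimately show False by (simp add: newv_def)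
      qed
      have pj: "is_parallelogram (ds ! j)" "u = pv (ds ! j)" using elim_par[OF jk j(2)] by auto
      have cj: "ds ! j \<in> dual_polys A c" using cell_ds[OF j(1)] .
      have ne: "ds ! j \<noteq> P" using u(2) pj(2) by auto
      have Hj: "\<forall>Q\<in>dual_polys A c. pv (ds ! j) \<in> poly_vert Q \<longrightarrow> Q \<noteq> ds ! j \<longrightarrow> lexless (xs A c (ds ! j)) (xs A c Q)"
        using pv[OF cj pj(1)] by (rule conjunct2)
      have lt: "lexless (xs A c (ds ! j)) (xs A c P)"
        using Hj[rule_format, OF less.prems(1)] u(1) pj(2) ne by simp
      have "card {Q \<in> dual_polys A c. lexless (xs A c Q) (xs A c (ds ! j))}
          < card {Q \<in> dual_polys A c. lexless (xs A c Q) (xs A c P)}"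
      proof (rule psubset_card_mono)
        show "finite {Q \<in> dual_polys A c. lexless (xs A c Q) (xs A c P)}" using finC by simp
        have sub: "{Q \<in> dual_polys A c. lexless (xs A c Q) (xs A c (ds ! j))}
          \<subseteq> {Q \<in> dual_polys A c. lexless (xs A c Q) (xs A c P)}"
          using lt lexless_trans by blast
        have "ds ! j \<in> {Q \<in> dual_polys A c. lexless (xs A c Q) (xs A c P)}" using cj lt by simp
        moreover have "ds ! j \<notin> {Q \<in> dual_polys A c. lexless (xs A c Q) (xs A c (ds ! j))}"
          by (simp add: lexless_def)
        ultimately show "{Q \<in> dual_polys A c. lexless (xs A c Q) (xs A c (ds ! j))}
          \<subset> {Q \<in> dual_polys A c. lexless (xs A c Q) (xs A c P)}" using sub by blast
      qed
      from less.hyps[OF this cj pj(1)] show "f u = 0" using pj(2) by simp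
    qed
  qed
  obtain p q r s where pqrs: "poly_vert P = {p, q, r, s}" "card {p, q, r, s} = 4" "p + r = q + s"
    using less.prems(2) unfolding is_parallelogram_def by blast
  obtain \<alpha> \<beta> \<gamma> where aff: "\<forall>v\<in>poly_vert P. f v = \<alpha> * fst (rp v) + \<beta> * snd (rp v) + \<gamma>"
    using f less.prems(1) unfolding Laff_def by blast
  have c1: "real_of_int (fst p) + real_of_int (fst r) = real_of_int (fst q) + real_of_int (fst s)"
    using arg_cong[OF pqrs(3), of fst] by (simp flip: of_int_add)
  have c2: "real_of_int (snd p) + real_of_int (snd r) = real_of_int (snd q) + real_of_int (snd s)"
    using arg_cong[OF pqrs(3), of snd] by (simp flip: of_int_add)
  have fp: "f p = \<alpha> * real_of_int (fst p) + \<beta> * real_of_int (snd p) + \<gamma>" using aff pqrs(1) by (simp add: rp_def)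
  have fq: "f q = \<alpha> * real_of_int (fst q) + \<beta> * real_of_int (snd q) + \<gamma>" using aff pqrs(1) by (simp add: rp_def)
  have fr: "f r = \<alpha> * real_of_int (fst r) + \<beta> * real_of_int (snd r) + \<gamma>" using aff pqrs(1) by (simp add: rp_def)
  have fs: "f s = \<alpha> * real_of_int (fst s) + \<beta> * real_of_int (snd s) + \<gamma>" using aff pqrs(1) by (simp add: rp_def)
  have "f p + f r = \<alpha> * (real_of_int (fst p) + real_of_int (fst r)) + \<beta> * (real_of_int (snd p) + real_of_int (snd r)) + 2 * \<gamma>"
    using fp fr by (simp add: algebra_simps)
  also have "\<dots> = f q + f s" using fq fs c1 c2 by (simp add: algebra_simps)
  finally have key: "f p + f r = f q + f s" .
  have d: "p \<noteq> q" "p \<noteq> r" "p \<noteq> s" "q \<noteq> r" "q \<noteq> s" "r \<noteq> s" using card4_dist[OF pqrs(2)] by auto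
  have pvin: "pv P \<in> {p, q, r, s}" using pv[OF less.prems] pqrs(1) by simp
  have op: "pv P \<noteq> p \<Longrightarrow> f p = 0" and oq: "pv P \<noteq> q \<Longrightarrow> f q = 0"
    and orr: "pv P \<noteq> r \<Longrightarrow> f r = 0" and os: "pv P \<noteq> s \<Longrightarrow> f s = 0"
    using oth pqrs(1) by auto
  from pvin show ?case
  proof (elim insertE)
    assume e: "pv P = p" thus ?thesis using key oq orr os d by simp
  next
    assume e: "pv P = q" thus ?thesis using key op orr os d by simp
  next
    assume e: "pv P = r" thus ?thesis using key op oq os d by simp
  next
    assume e: "pv P = s" thus ?thesis using key op oq orr d by simp
  qed simp
qed

end



context tsetup begin

lemma stepB:
  assumes f: "f \<in> Laff (subdiv_vert A c) (dual_polys A c)" and zB: "\<forall>b\<in>Bs. f b = 0"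
  shows "i < length ds \<Longrightarrow> \<forall>u\<in>poly_vert (ds ! i). f u = 0"
proof (induction i rule: less_induct)
  case (less i)
  have ci: "ds ! i \<in> dual_polys A c" using cell_ds[OF less.prems] .
  show ?case
  proof (cases "i < k")
    case True
    show ?thesis
    proof
      fix u assume u: "u \<in> poly_vert (ds ! i)"
      have uV: "u \<in> subdiv_vert A c" using vert_V[OF ci] u by blast
      show "f u = 0"
      proof (cases "u \<in> Bs")
        case True thus ?thesis using zB by blast
      next
        case False
        then obtain j where j: "j < length ds" "u \<in> elim j" using notB[OF uV] by blast
        have jk: "j < k"
        proof (rule ccontr)
          assume njk: "\<not> j < k"
          hence "u \<in> newv j" using elim_new j(2) by blast
          moreover have "u \<in> oldv j" using old_mem[of u i j] u True njk by auto
          ultimately show False by (simp add: newv_def)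
        qed
        have pj: "is_parallelogram (ds ! j)" "u = pv (ds ! j)" using elim_par[OF jk j(2)] by auto
        show ?thesis using stepA[OF f zB cell_ds[OF j(1)] pj(1)] pj(2) by simp
      qed
    qed
  next
    case False
    define Z where "Z = (poly_vert (ds ! i) \<inter> oldv i) \<union> keep i"
    have kp: "keep i \<subseteq> newv i" "card (keep i) = min (card (newv i)) (3 - mc i)"
      using keep[OF less.prems] by auto
    have finP: "finite (poly_vert (ds ! i))" using vert_fin[OF ci] .
    have finN: "finite (newv i)" using finP by (simp add: newv_def)
    have Zsub: "Z \<subseteq> poly_vert (ds ! i)" using kp by (auto simp: Z_def newv_def)
    have Z0: "\<forall>u\<in>Z. f u = 0"
    proof
      fix u assume "u \<in> Z"
      then consider "u \<in> poly_vert (ds ! i) \<inter> oldv i" | "u \<in> keep i" unfolding Z_def by blast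
      then show "f u = 0"
      proof cases
        case 1
        then obtain j where j: "j < i" "u \<in> poly_vert (ds ! j)" by (auto simp: oldv_def)
        thus ?thesis using less.IH[of j] less.prems by auto
      next
        case 2
        have un: "u \<in> newv i" using 2 kp by blast
        hence up: "u \<in> poly_vert (ds ! i)" "u \<notin> oldv i" by (auto simp: newv_def)
        have uV: "u \<in> subdiv_vert A c" using vert_V[OF ci] up by blast
        have "u \<notin> elim j" if j: "j < length ds" for j
        proof
          assume ue: "u \<in> elim j"
          consider "j < i" | "j = i" | "i < j" by linarith
          thus False
          proof cases
            case 1
            have "u \<in> poly_vert (ds ! j)" using elim_sub[OF j] ue by blast
            hence "u \<in> oldv i" using old_mem 1 by blast
            thus False using up by simp
          next
            case 2 thus False using ue 2 False \<open>u \<in> keep i\<close> by (simp add: elim_def)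
          next
            case 3
            hence "\<not> j < k" using False by simp
            hence "u \<in> newv j" using elim_new ue by blast
            moreover have "u \<in> oldv j" using old_mem[of u i j] up 3 by auto
            ultimately show False by (simp add: newv_def)
          qed
        qed
        hence "u \<in> Bs" using uV by (auto simp: Bs_def)
        thus ?thesis using zB by blast
      qed
    qed
    have finK: "finite (keep i)" using finite_subset[OF kp(1) finN] .
    have cardZ: "card Z = mc i + card (keep i)"
    proof -
      have "(poly_vert (ds ! i) \<inter> oldv i) \<inter> keep i = {}" using kp by (auto simp: newv_def)
      hence "card Z = card (poly_vert (ds ! i) \<inter> oldv i) + card (keep i)"
        unfolding Z_def using finP finK by (intro card_Un_disjoint) auto
      thus ?thesis by (simp add: mc_def)
    qed
    obtain \<alpha> \<beta> \<gamma> where aff: "\<forall>v\<in>poly_vert (ds ! i). f v = \<alpha> * fst (rp v) + \<beta> * snd (rp v) + \<gamma>"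
      using f ci unfolding Laff_def by blast
    show ?thesis
    proof (cases "3 \<le> card Z")
      case True
      obtain T where T: "T \<subseteq> Z" "card T = 3" using obtain_subset_with_card_n[OF True] by metis
      then obtain x y z where xyz: "T = {x, y, z}" "x \<noteq> y" "y \<noteq> z" "x \<noteq> z"
        by (auto simp: card_3_iff)
      have inZ: "x \<in> Z" "y \<in> Z" "z \<in> Z" using T(1) xyz(1) by auto
      have "\<forall>t\<in>{x,y,z}. \<alpha> * fst (rp t) + \<beta> * snd (rp t) + \<gamma> = 0"
      proof
        fix t assume "t \<in> {x,y,z}"
        hence tZ: "t \<in> Z" using inZ by blast
        have "f t = \<alpha> * fst (rp t) + \<beta> * snd (rp t) + \<gamma>" using aff tZ Zsub by blast
        thus "\<alpha> * fst (rp t) + \<beta> * snd (rp t) + \<gamma> = 0" using Z0 tZ by simp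
      qed
      hence ab: "\<alpha> = 0 \<and> \<beta> = 0"
        by (intro three_extreme[of x "ds ! i" y z]) (use inZ Zsub xyz in auto)
      have "f x = \<alpha> * fst (rp x) + \<beta> * snd (rp x) + \<gamma>" using aff inZ Zsub by blast
      hence "\<gamma> = 0" using Z0 inZ ab by simp
      thus ?thesis using aff ab by simp
    next
      case False
      have "card (keep i) = card (newv i)"
      proof (rule ccontr)
        assume "card (keep i) \<noteq> card (newv i)"
        hence "card (keep i) = 3 - mc i" using kp(2) by (simp add: min_def split: if_splits)
        thus False using cardZ False by linarith
      qed
      hence "keep i = newv i" using card_subset_eq[OF finN kp(1)] by simp
      hence "poly_vert (ds ! i) \<subseteq> Z" by (auto simp: Z_def newv_def)
      thus ?thesis using Z0 by blast
    qed
  qed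
qed

lemma zero_prop:
  assumes f: "f \<in> Laff (subdiv_vert A c) (dual_polys A c)" and zB: "\<forall>b\<in>Bs. f b = 0"
  shows "f = 0"
proof (rule ext)
  fix w
  show "f w = 0 w"
  proof (cases "w \<in> subdiv_vert A c")
    case True
    then obtain P where P: "P \<in> dual_polys A c" "w \<in> poly_vert P" by (auto simp: subdiv_vert_def)
    then have "P \<in> set ds" using setds by simp
    then obtain i where i: "i < length ds" "ds ! i = P" by (auto simp: in_set_conv_nth)
    show ?thesis using stepB[OF f zB i(1)] i P by auto
  next
    case False
    have "f w = 0" using f False unfolding Laff_def by blast
    thus ?thesis by simp
  qed
qed

lemma finBs: "finite Bs"
  unfolding Bs_def using finV by simp

end



context tsetup begin

lemma card_elim_lt:
  assumes "i < k"
  shows "int (card (elim i)) = int (card (poly_vert (ds ! i))) - 3"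
proof -
  have i: "i < length ds" using assms kle by simp
  show ?thesis
  proof (cases "is_parallelogram (ds ! i)")
    case True
    then obtain p q r s where "poly_vert (ds ! i) = {p, q, r, s}" "card {p, q, r, s} = 4"
      unfolding is_parallelogram_def by blast
    thus ?thesis using True assms by (simp add: elim_def)
  next
    case False
    hence "is_triangle (ds ! i)" using tp i assms by blast
    thus ?thesis using False assms by (simp add: elim_def is_triangle_def)
  qed
qed

lemma card_elim_ge:
  assumes "k \<le> i" "i < length ds"
  shows "int (card (poly_vert (ds ! i))) - max 3 (int (mc i)) \<le> int (card (elim i))"
proof -
  have finP: "finite (poly_vert (ds ! i))" using vert_fin[OF cell_ds[OF assms(2)]] .
  have finN: "finite (newv i)" using finP by (simp add: newv_def)
  have kp: "keep i \<subseteq> newv i" "card (keep i) = min (card (newv i)) (3 - mc i)"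
    using keep[OF assms(2)] by auto
  have cP: "card (poly_vert (ds ! i)) = mc i + card (newv i)"
    unfolding mc_def newv_def by (rule card_Int_Diff[OF finP])
  have cE: "card (elim i) = card (newv i) - card (keep i)"
    using assms(1) card_Diff_subset[OF finite_subset[OF kp(1) finN] kp(1)] by (simp add: elim_def)
  show ?thesis using cP cE kp(2)
    by (cases "mc i \<le> 3"; cases "card (newv i) \<le> 3 - mc i") (auto simp: min_def max_def of_nat_diff)
qed

lemma count:
  "int (card Bs) \<le> int (card (subdiv_vert A c))
     - (\<Sum>i < k. int (card (poly_vert (ds ! i))) - 3)
     - (\<Sum>i \<in> {k..<length ds}. int (card (poly_vert (ds ! i)))
           - max 3 (int (card (poly_vert (ds ! i) \<inter> (\<Union>j < i. poly_vert (ds ! j))))))"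
proof -
  let ?n = "length ds"
  let ?U = "\<Union>i<?n. elim i"
  have Usub: "?U \<subseteq> subdiv_vert A c" using elim_sub vert_V cell_ds by blast
  have finU: "finite ?U" using finite_subset[OF Usub finV] .
  have cU: "card ?U = (\<Sum>i<?n. card (elim i))"
  proof (rule card_UN_disjoint)
    show "\<forall>i\<in>{..<?n}. finite (elim i)"
      using elim_sub vert_fin cell_ds finite_subset by (metis lessThan_iff)
    show "\<forall>i\<in>{..<?n}. \<forall>j\<in>{..<?n}. i \<noteq> j \<longrightarrow> elim i \<inter> elim j = {}"
      using elim_disj by auto
  qed simp
  have cB: "card Bs = card (subdiv_vert A c) - card ?U"
    unfolding Bs_def by (rule card_Diff_subset[OF finU Usub])
  have le: "card ?U \<le> card (subdiv_vert A c)" using card_mono[OF finV Usub] .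
  have iB: "int (card Bs) = int (card (subdiv_vert A c)) - (\<Sum>i<?n. int (card (elim i)))"
    using cB le cU by (simp add: of_nat_diff flip: of_nat_sum)
  have split: "(\<Sum>i<?n. int (card (elim i))) = (\<Sum>i<k. int (card (elim i))) + (\<Sum>i\<in>{k..<?n}. int (card (elim i)))"
  proof -
    have e: "{..<?n} = {..<k} \<union> {k..<?n}" using kle by auto
    have "(\<Sum>i\<in>{..<k} \<union> {k..<?n}. int (card (elim i))) = (\<Sum>i<k. int (card (elim i))) + (\<Sum>i\<in>{k..<?n}. int (card (elim i)))"
      by (rule sum.union_disjoint) auto
    thus ?thesis using e by simp
  qed
  have s1: "(\<Sum>i<k. int (card (elim i))) = (\<Sum>i<k. int (card (poly_vert (ds ! i))) - 3)"
    by (rule sum.cong) (auto simp: card_elim_lt)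
  have s2: "(\<Sum>i\<in>{k..<?n}. int (card (poly_vert (ds ! i))) - max 3 (int (mc i))) \<le> (\<Sum>i\<in>{k..<?n}. int (card (elim i)))"
    by (rule sum_mono) (auto intro: card_elim_ge)
  show ?thesis using iB split s1 s2 unfolding mc_def oldv_def by linarith
qed

end

theorem mainTheorem5:
  fixes A :: "(int \<times> int) set" and c :: "int \<times> int \<Rightarrow> real"
    and ds :: "(real \<times> real) set list" and k :: nat
  assumes "finite A"
    and "aff_dim (convex hull (rp ` A)) = 2"
    and "distinct ds" and "set ds = dual_polys A c"
    and "k \<le> length ds"
    and "\<forall>i < length ds. (i < k \<longleftrightarrow> is_triangle (ds ! i) \<or> is_parallelogram (ds ! i))"
  shows "trop_rank A c \<le>
           int (card (subdiv_vert A c)) - 1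
           - (\<Sum>i < k. int (card (poly_vert (ds ! i))) - 3)
           - (\<Sum>i \<in> {k..<length ds}. int (card (poly_vert (ds ! i)))
                 - max 3 (int (card (poly_vert (ds ! i) \<inter> (\<Union>j < i. poly_vert (ds ! j))))))"
proof -
  interpret ts: tsetup A c ds k
    using assms by unfold_locales auto
  let ?S = "{c1 - c2 | c1 c2. c1 \<in> same_subdiv_coeffs A c \<and> c2 \<in> same_subdiv_coeffs A c}
      \<union> {(\<lambda>w. if w \<in> subdiv_vert A c then 1 else 0)}"
  have "fs.dim ?S \<le> card ts.Bs"
    by (rule dim_le_restrict[OF span_S_Laff ts.finBs ts.zero_prop]) auto
  hence "trop_rank A c \<le> int (card ts.Bs) - 1"
    unfolding trop_rank_def Let_def by simp
  thus ?thesis using ts.count by linarith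
qed


end
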